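(* Let $(X,d)$ be a finite metric space with $n$ points, doubling dimension $\dim$, and all inter-point distances greater than $1$; let $1\le k\le n-2$ be an integer, $0<\varepsilon\le\frac13$, $v\in X$, and let $Q$ and $H_Q$ be as constructed in the context. Then $H_Q$ is a $(k,1+3\varepsilon,v)$-vertex-fault-tolerant single-sink spanner for $Q\cup\{v\}$, i.e. for every $S\subseteq Q$ with $|S|\le k$ and every $x\in Q\setminus S$ we have $d_{H_Q\setminus S}(v,x)\le(1+3\varepsilon)d(v,x)$; moreover $H_Q$ has maximum degree $O(\Gamma k)$ and hop-diameter $O(\log n)$ (every $x\in Q$ is joined to $v$ in $H_Q$ by a path of length at most $(1+3\varepsilon)d(v,x)$ with $O(\log n)$ edges).
   Context: The doubling dimension $\dim$ is the smallest $\rho$ such that every ball can be covered by $2^\rho$ balls of half the radius. $B(x,r)=\{y: d(x,y)\le r\}$. A set $Y$ is an $r$-net of a set $U$ if $Y\subseteq U$, every point of $U$ is within distance $r$ of some point of $Y$, and distinct points of $Y$ are at distance $>r$. Let $\Delta=\max_{x,y}d(x,y)$, $\ell=\lceil\log_{1/\varepsilon}\Delta\rceil$, $r_0=1$ and $r_i=\varepsilon^{-i}$ for $i\in\{1,\dots,\ell\}$. Rings: $R_0=\{v\}$ and $R_i=B(v,r_i)\setminus B(v,r_{i-1})$ for $1\le i\le\ell$. For each $i\ge1$ let $N_i$ be an $\varepsilon r_{i-1}$-net of $R_i$, and let $\Gamma=\lceil\varepsilon^{-4\dim}\rceil$. For each $y\in N_i$ the cluster $C_y$ consists of the points $x\in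 R_i$ whose closest point in $N_i$ is $y$ (ties broken arbitrarily). For each such $y$ choose an arbitrary set of portals $Q_y\subseteq C_y$ with $|Q_y|=\min(k+1,|C_y|)$, and let $Q=\bigcup_{i\ge1}\bigcup_{y\in N_i}Q_y$. Write $Q=\{q_1,\dots,q_m\}$ with $d(v,q_1)\le\cdots\le d(v,q_m)$. For $j\ge1$ let $A_j=\{q_l: (j-1)(k+1)+1\le l\le j(k+1)\}$, let $A_0=\{v\}$ and $A_i=A_0$ for $i<0$. $H_Q$ is the graph on $Q\cup\{v\}$ obtained by, for every $j\ge1$ with $A_j\neq\emptyset$, adding an edge between every point of $A_j$ and every point of $A_{\lceil (j-2\Gamma-1)/2\rceil}$; edge weights are distances $d$. $H\setminus S$ denotes $H$ with vertices of $S$ removed. Implicit constants in $O(\cdot)$ are absolute. *)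

theory Defs
  imports "HOL-Analysis.Analysis"
begin

text \<open>Finite metric spaces are represented by a finite carrier X of natural numbers
  together with a distance function d (every finite metric space is isometric to one
  of this form).\<close>

definition metric_on :: "nat set \<Rightarrow> (nat \<Rightarrow> nat \<Rightarrow> real) \<Rightarrow> bool" where
  "metric_on X d \<longleftrightarrow>
     (\<forall>x\<in>X. \<forall>y\<in>X. d x y \<ge> 0 \<and> (d x y = 0 \<longleftrightarrow> x = y) \<and> d x y = d y x) \<and>
     (\<forall>x\<in>X. \<forall>y\<in>X. \<forall>z\<in>X. d x z \<le> d x y + d y z)"

definition ball_in :: "nat set \<Rightarrow> (nat \<Rightarrow> nat \<Rightarrow> real) \<Rightarrow> nat \<Rightarrow> real \<Rightarrow> nat set" where
  "ball_in X d x r = {y\<in>X. d x y \<le> r}"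

definition doubling_dim :: "nat set \<Rightarrow> (nat \<Rightarrow> nat \<Rightarrow> real) \<Rightarrow> real" where
  "doubling_dim X d = Inf {\<rho>::real. \<forall>x\<in>X. \<forall>r. \<exists>C\<subseteq>X.
       real (card C) \<le> 2 powr \<rho> \<and> ball_in X d x r \<subseteq> (\<Union>c\<in>C. ball_in X d c (r/2))}"

definition diam :: "nat set \<Rightarrow> (nat \<Rightarrow> nat \<Rightarrow> real) \<Rightarrow> real" where
  "diam X d = Max {d x y | x y. x \<in> X \<and> y \<in> X}"

definition lev :: "nat set \<Rightarrow> (nat \<Rightarrow> nat \<Rightarrow> real) \<Rightarrow> real \<Rightarrow> nat" where
  "lev X d \<epsilon> = nat \<lceil>log (1/\<epsilon>) (diam X d)\<rceil>"

definition rad :: "real \<Rightarrow> nat \<Rightarrow> real" where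
  "rad \<epsilon> i = (1/\<epsilon>) ^ i"

definition ring :: "nat set \<Rightarrow> (nat \<Rightarrow> nat \<Rightarrow> real) \<Rightarrow> real \<Rightarrow> nat \<Rightarrow> nat \<Rightarrow> nat set" where
  "ring X d \<epsilon> v i = (if i = 0 then {v}
      else ball_in X d v (rad \<epsilon> i) - ball_in X d v (rad \<epsilon> (i - 1)))"

definition is_net :: "(nat \<Rightarrow> nat \<Rightarrow> real) \<Rightarrow> real \<Rightarrow> nat set \<Rightarrow> nat set \<Rightarrow> bool" where
  "is_net d r Y U \<longleftrightarrow> Y \<subseteq> U \<and> (\<forall>u\<in>U. \<exists>y\<in>Y. d u y \<le> r) \<and>
     (\<forall>y1\<in>Y. \<forall>y2\<in>Y. y1 \<noteq> y2 \<longrightarrow> d y1 y2 > r)"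

text \<open>cl i x is the chosen closest net point of N_i to x (ties broken arbitrarily);
  the cluster C_y of y in N_i.\<close>
definition cluster :: "nat set \<Rightarrow> (nat \<Rightarrow> nat \<Rightarrow> real) \<Rightarrow> real \<Rightarrow> nat \<Rightarrow>
    (nat \<Rightarrow> nat \<Rightarrow> nat) \<Rightarrow> nat \<Rightarrow> nat \<Rightarrow> nat set" where
  "cluster X d \<epsilon> v cl i y = {x \<in> ring X d \<epsilon> v i. cl i x = y}"

definition portal_set :: "nat set \<Rightarrow> (nat \<Rightarrow> nat \<Rightarrow> real) \<Rightarrow> real \<Rightarrow>
    (nat \<Rightarrow> nat set) \<Rightarrow> (nat \<Rightarrow> nat \<Rightarrow> nat set) \<Rightarrow> nat set" where
  "portal_set X d \<epsilon> N P = (\<Union>i\<in>{1..lev X d \<epsilon>}. \<Union>y\<in>N i. P i y)"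

text \<open>All choices in the construction: nets N, closest-point assignment cl, portals P,
  and the enumeration q_1,...,q_m of Q sorted by distance from v.\<close>
definition valid_construction :: "nat set \<Rightarrow> (nat \<Rightarrow> nat \<Rightarrow> real) \<Rightarrow> nat \<Rightarrow> real \<Rightarrow> nat \<Rightarrow>
    (nat \<Rightarrow> nat set) \<Rightarrow> (nat \<Rightarrow> nat \<Rightarrow> nat) \<Rightarrow> (nat \<Rightarrow> nat \<Rightarrow> nat set) \<Rightarrow> (nat \<Rightarrow> nat) \<Rightarrow> bool" where
  "valid_construction X d k \<epsilon> v N cl P q \<longleftrightarrow>
     (\<forall>i\<in>{1..lev X d \<epsilon>}. is_net d (\<epsilon> * rad \<epsilon> (i - 1)) (N i) (ring X d \<epsilon> v i)) \<and>
     (\<forall>i\<in>{1..lev X d \<epsilon>}. \<forall>x\<in>ring X d \<epsilon> v i.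
         cl i x \<in> N i \<and> (\<forall>y\<in>N i. d x (cl i x) \<le> d x y)) \<and>
     (\<forall>i\<in>{1..lev X d \<epsilon>}. \<forall>y\<in>N i.
         P i y \<subseteq> cluster X d \<epsilon> v cl i y \<and>
         card (P i y) = min (k + 1) (card (cluster X d \<epsilon> v cl i y))) \<and>
     bij_betw q {1..card (portal_set X d \<epsilon> N P)} (portal_set X d \<epsilon> N P) \<and>
     (\<forall>a b. 1 \<le> a \<longrightarrow> a \<le> b \<longrightarrow> b \<le> card (portal_set X d \<epsilon> N P) \<longrightarrow> d v (q a) \<le> d v (q b))"

definition Gamma :: "nat set \<Rightarrow> (nat \<Rightarrow> nat \<Rightarrow> real) \<Rightarrow> real \<Rightarrow> int" where
  "Gamma X d \<epsilon> = \<lceil>\<epsilon> powr (- 4 * doubling_dim X d)\<rceil>"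

definition Aset :: "nat set \<Rightarrow> (nat \<Rightarrow> nat) \<Rightarrow> nat \<Rightarrow> nat \<Rightarrow> int \<Rightarrow> nat set" where
  "Aset Q q k v j = (if j \<le> 0 then {v} else
     {q l | l. (j - 1) * (int k + 1) + 1 \<le> int l \<and> int l \<le> j * (int k + 1) \<and> 1 \<le> l \<and> l \<le> card Q})"

definition HQ_edges :: "nat set \<Rightarrow> (nat \<Rightarrow> nat) \<Rightarrow> nat \<Rightarrow> int \<Rightarrow> nat \<Rightarrow> nat set set" where
  "HQ_edges Q q k \<Gamma> v = {{a, b} | a b j. j \<ge> 1 \<and> Aset Q q k v j \<noteq> {} \<and>
      a \<in> Aset Q q k v j \<and> b \<in> Aset Q q k v \<lceil>real_of_int (j - 2 * \<Gamma> - 1) / 2\<rceil>}"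

definition is_path :: "nat set \<Rightarrow> nat set set \<Rightarrow> nat list \<Rightarrow> nat \<Rightarrow> nat \<Rightarrow> bool" where
  "is_path V E p a b \<longleftrightarrow> p \<noteq> [] \<and> hd p = a \<and> last p = b \<and> distinct p \<and> set p \<subseteq> V \<and>
     (\<forall>i. Suc i < length p \<longrightarrow> {p ! i, p ! Suc i} \<in> E)"

definition path_weight :: "(nat \<Rightarrow> nat \<Rightarrow> real) \<Rightarrow> nat list \<Rightarrow> real" where
  "path_weight d p = (\<Sum>i<length p - 1. d (p ! i) (p ! Suc i))"

text \<open>Shortest-path distance (infinity if no path).\<close>
definition graph_dist :: "nat set \<Rightarrow> nat set set \<Rightarrow> (nat \<Rightarrow> nat \<Rightarrow> real) \<Rightarrow> nat \<Rightarrow> nat \<Rightarrow> ereal" where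
  "graph_dist V E d a b = (INF p\<in>{p. is_path V E p a b}. ereal (path_weight d p))"

definition del_vertices_V :: "nat set \<Rightarrow> nat set \<Rightarrow> nat set" where
  "del_vertices_V V S = V - S"
definition del_vertices_E :: "nat set set \<Rightarrow> nat set \<Rightarrow> nat set set" where
  "del_vertices_E E S = {e\<in>E. e \<inter> S = {}}"

definition degree :: "nat set set \<Rightarrow> nat \<Rightarrow> nat" where
  "degree E u = card {w. {u, w} \<in> E}"

end

theory Submission imports Defs begin

locale cons =
  fixes X :: "nat set" and d :: "nat \<Rightarrow> nat \<Rightarrow> real" and k :: nat and \<epsilon> :: real and v :: nat
    and N :: "nat \<Rightarrow> nat set" and cl :: "nat \<Rightarrow> nat \<Rightarrow> nat" and P :: "nat \<Rightarrow> nat \<Rightarrow> nat set"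
    and q :: "nat \<Rightarrow> nat"
  assumes finX: "finite X" and met: "metric_on X d"
    and sep: "\<forall>x\<in>X. \<forall>y\<in>X. x \<noteq> y \<longrightarrow> d x y > 1"
    and k1: "1 \<le> k" and kn: "k + 2 \<le> card X" and eps0: "0 < \<epsilon>" and eps3: "\<epsilon> \<le> 1/3"
    and vX: "v \<in> X" and vc: "valid_construction X d k \<epsilon> v N cl P q"
begin

abbreviation "Q \<equiv> portal_set X d \<epsilon> N P"
abbreviation "m \<equiv> card Q"
abbreviation "G \<equiv> Gamma X d \<epsilon>"
abbreviation "L \<equiv> lev X d \<epsilon>"

lemma d_nonneg: "x \<in> X \<Longrightarrow> y \<in> X \<Longrightarrow> d x y \<ge> 0"
  using met unfolding metric_on_def by blast
lemma d_self: "x \<in> X \<Longrightarrow> d x x = 0"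
  using met unfolding metric_on_def by blast
lemma d_sym: "x \<in> X \<Longrightarrow> y \<in> X \<Longrightarrow> d x y = d y x"
  using met unfolding metric_on_def by blast
lemma d_tri: "x \<in> X \<Longrightarrow> y \<in> X \<Longrightarrow> z \<in> X \<Longrightarrow> d x z \<le> d x y + d y z"
  using met unfolding metric_on_def by blast

lemma rad_Suc: "rad \<epsilon> (Suc i) = rad \<epsilon> i / \<epsilon>"
  unfolding rad_def by simp
lemma rad_less_iff: "rad \<epsilon> a < rad \<epsilon> b \<longleftrightarrow> a < b"
proof -
  have "1 < 1/\<epsilon>" using eps0 eps3 by (simp add: field_simps)
  then show ?thesis unfolding rad_def by (rule power_strict_increasing_iff)
qed
lemma rad_ge1: "rad \<epsilon> i \<ge> 1"
proof -
  have "1 \<le> 1/\<epsilon>" using eps0 eps3 by (simp add: field_simps)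
  then show ?thesis unfolding rad_def by (rule one_le_power)
qed

lemma nets: "i \<in> {1..L} \<Longrightarrow> is_net d (\<epsilon> * rad \<epsilon> (i - 1)) (N i) (ring X d \<epsilon> v i)"
  using vc unfolding valid_construction_def by blast
lemma portals: "i \<in> {1..L} \<Longrightarrow> y \<in> N i \<Longrightarrow> P i y \<subseteq> cluster X d \<epsilon> v cl i y \<and>
         card (P i y) = min (k + 1) (card (cluster X d \<epsilon> v cl i y))"
  using vc unfolding valid_construction_def by blast
lemma qbij: "bij_betw q {1..m} Q"
  using vc unfolding valid_construction_def by blast
lemma qsorted: "1 \<le> a \<Longrightarrow> a \<le> b \<Longrightarrow> b \<le> m \<Longrightarrow> d v (q a) \<le> d v (q b)"
  using vc unfolding valid_construction_def by blast

lemma ring_sub: "1 \<le> i \<Longrightarrow> z \<in> ring X d \<epsilon> v i \<Longrightarrow> z \<in> X \<and> rad \<epsilon> (i-1) < d v z \<and> d v z \<le> rad \<epsilon> i"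
  unfolding ring_def ball_in_def by auto

lemma ring_X: "1 \<le> i \<Longrightarrow> ring X d \<epsilon> v i \<subseteq> X"
  using ring_sub by blast

lemma Q_ring: "z \<in> Q \<Longrightarrow> \<exists>i\<in>{1..L}. \<exists>y\<in>N i. z \<in> P i y \<and> z \<in> ring X d \<epsilon> v i"
proof -
  assume "z \<in> Q"
  then obtain i y where i: "i \<in> {1..L}" "y \<in> N i" "z \<in> P i y" unfolding portal_set_def by blast
  then have "z \<in> ring X d \<epsilon> v i" using portals[OF i(1,2)] unfolding cluster_def by blast
  then show ?thesis using i by blast
qed

lemma Q_props: "z \<in> Q \<Longrightarrow> \<exists>i\<in>{1..L}. z \<in> X \<and> rad \<epsilon> (i-1) < d v z \<and> d v z \<le> rad \<epsilon> i"
  using Q_ring ring_sub by fastforce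

lemma QX: "Q \<subseteq> X" using Q_props by blast
lemma finQ: "finite Q" using QX finX finite_subset by blast
lemma vQ: "v \<notin> Q"
proof
  assume "v \<in> Q"
  then obtain i where "rad \<epsilon> (i-1) < d v v" using Q_props by blast
  then show False using d_self[OF vX] rad_ge1[of "i-1"] by simp
qed
lemma dvQ: assumes z: "z \<in> Q" shows "d v z > 1"
proof -
  have zX: "z \<in> X" using z QX by blast
  have zv: "v \<noteq> z" using z vQ by blast
  show ?thesis using bspec[OF bspec[OF sep vX] zX] zv by simp
qed


definition "DS = {\<rho>::real. \<forall>x\<in>X. \<forall>r. \<exists>C\<subseteq>X.
       real (card C) \<le> 2 powr \<rho> \<and> ball_in X d x r \<subseteq> (\<Union>c\<in>C. ball_in X d c (r/2))}"

lemma dim_eq: "doubling_dim X d = Inf DS"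
  unfolding doubling_dim_def DS_def by simp

lemma DS_nonempty: "log 2 (card X) \<in> DS"
proof -
  have cX: "card X > 0" using kn by simp
  have "\<forall>x\<in>X. \<forall>r. ball_in X d x r \<subseteq> (\<Union>c\<in>X. ball_in X d c (r/2))"
  proof (intro ballI allI subsetI)
    fix x r y assume x: "x \<in> X" and y: "y \<in> ball_in X d x r"
    then have yX: "y \<in> X" and "d x y \<le> r" unfolding ball_in_def by auto
    then have "r \<ge> 0" using d_nonneg[OF x yX] by linarith
    then have "y \<in> ball_in X d y (r/2)" using yX d_self[OF yX] unfolding ball_in_def by auto
    then show "y \<in> (\<Union>c\<in>X. ball_in X d c (r/2))" using yX by blast
  qed
  moreover have "real (card X) \<le> 2 powr log 2 (card X)" using cX by simp
  ultimately show ?thesis unfolding DS_def by blast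
qed

lemma DS_ge0: "\<rho> \<in> DS \<Longrightarrow> \<rho> \<ge> 0"
proof -
  assume "\<rho> \<in> DS"
  then obtain C where C: "C \<subseteq> X" "real (card C) \<le> 2 powr \<rho>"
      "ball_in X d v 0 \<subseteq> (\<Union>c\<in>C. ball_in X d c (0/2))"
    using vX unfolding DS_def by blast
  have "v \<in> ball_in X d v 0" using vX d_self[OF vX] unfolding ball_in_def by auto
  then have "C \<noteq> {}" using C(3) by blast
  moreover have "finite C" using C(1) finX finite_subset by blast
  ultimately have "card C \<ge> 1" by (simp add: Suc_leI card_gt_0_iff)
  then have "1 \<le> 2 powr \<rho>" using C(2) by linarith
  show "\<rho> \<ge> 0"
  proof (rule ccontr)
    assume "\<not> \<rho> \<ge> 0"
    then have "2 powr \<rho> < 2 powr (0::real)" by (intro powr_less_mono) auto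
    then show False using \<open>1 \<le> 2 powr \<rho>\<close> by simp
  qed
qed

lemma dim_ge0: "doubling_dim X d \<ge> 0"
  unfolding dim_eq by (rule cInf_greatest) (use DS_nonempty DS_ge0 in auto)

lemma cover_iter:
  assumes "\<rho> \<in> DS"
  shows "x \<in> X \<Longrightarrow> \<exists>C\<subseteq>X. real (card C) \<le> (2 powr \<rho>) ^ t \<and>
      ball_in X d x r \<subseteq> (\<Union>c\<in>C. ball_in X d c (r / 2 ^ t))"
proof (induction t)
  case 0
  then show ?case by (intro exI[of _ "{x}"]) auto
next
  case (Suc t)
  then obtain C where C: "C \<subseteq> X" "real (card C) \<le> (2 powr \<rho>) ^ t"
      "ball_in X d x r \<subseteq> (\<Union>c\<in>C. ball_in X d c (r / 2 ^ t))" by blast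
  have "\<forall>c\<in>C. \<exists>D\<subseteq>X. real (card D) \<le> 2 powr \<rho> \<and>
      ball_in X d c (r / 2 ^ t) \<subseteq> (\<Union>c\<in>D. ball_in X d c ((r / 2 ^ t)/2))"
    using assms C(1) unfolding DS_def by blast
  then obtain D where D: "\<And>c. c \<in> C \<Longrightarrow> D c \<subseteq> X \<and> real (card (D c)) \<le> 2 powr \<rho> \<and>
      ball_in X d c (r / 2 ^ t) \<subseteq> (\<Union>c\<in>D c. ball_in X d c ((r / 2 ^ t)/2))"
    by metis
  have finC: "finite C" using C(1) finX finite_subset by blast
  have "real (card (\<Union>c\<in>C. D c)) \<le> real (\<Sum>c\<in>C. card (D c))"
    using card_UN_le[OF finC, of D] by linarith
  also have "\<dots> = (\<Sum>c\<in>C. real (card (D c)))" by simp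
  also have "\<dots> \<le> (\<Sum>c\<in>C. 2 powr \<rho>)" by (rule sum_mono) (use D in blast)
  also have "\<dots> = real (card C) * 2 powr \<rho>" by simp
  also have "\<dots> \<le> (2 powr \<rho>) ^ t * 2 powr \<rho>" using C(2) by (simp add: mult_right_mono)
  also have "\<dots> = (2 powr \<rho>) ^ Suc t" by simp
  finally have c: "real (card (\<Union>c\<in>C. D c)) \<le> (2 powr \<rho>) ^ Suc t" .
  have "ball_in X d x r \<subseteq> (\<Union>c\<in>(\<Union>c\<in>C. D c). ball_in X d c (r / 2 ^ Suc t))"
  proof
    fix y assume "y \<in> ball_in X d x r"
    then obtain c where c: "c \<in> C" "y \<in> ball_in X d c (r / 2 ^ t)" using C(3) by blast
    then obtain e where "e \<in> D c" "y \<in> ball_in X d e ((r / 2 ^ t)/2)" using D[OF c(1)] by blast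
    then show "y \<in> (\<Union>c\<in>(\<Union>c\<in>C. D c). ball_in X d c (r / 2 ^ Suc t))"
      using c(1) by (auto simp: field_simps)
  qed
  moreover have "(\<Union>c\<in>C. D c) \<subseteq> X" using D by blast
  ultimately show ?case using c by blast
qed

lemma packing:
  assumes "\<rho> \<in> DS" "x \<in> X" "Y \<subseteq> ball_in X d x R"
    "\<forall>y1\<in>Y. \<forall>y2\<in>Y. y1 \<noteq> y2 \<longrightarrow> d y1 y2 > s" "2 * R / 2 ^ t \<le> s"
  shows "real (card Y) \<le> (2 powr \<rho>) ^ t"
proof -
  obtain C where C: "C \<subseteq> X" "real (card C) \<le> (2 powr \<rho>) ^ t"
      "ball_in X d x R \<subseteq> (\<Union>c\<in>C. ball_in X d c (R / 2 ^ t))"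
    using cover_iter[OF assms(1,2)] by blast
  define f where "f y = (SOME c. c \<in> C \<and> y \<in> ball_in X d c (R / 2 ^ t))" for y
  have f: "f y \<in> C \<and> y \<in> ball_in X d (f y) (R / 2 ^ t)" if "y \<in> Y" for y
  proof -
    have "\<exists>c. c \<in> C \<and> y \<in> ball_in X d c (R / 2 ^ t)" using that assms(3) C(3) by blast
    then show ?thesis unfolding f_def by (rule someI_ex)
  qed
  have "inj_on f Y"
  proof (rule inj_onI, rule ccontr)
    fix y1 y2 assume y: "y1 \<in> Y" "y2 \<in> Y" "f y1 = f y2" "y1 \<noteq> y2"
    let ?c = "f y1"
    have cX: "?c \<in> X" using f[OF y(1)] C(1) by blast
    have y1X: "y1 \<in> X" and y2X: "y2 \<in> X" using y(1,2) assms(3) unfolding ball_in_def by auto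
    have a: "d ?c y1 \<le> R / 2 ^ t" using f[OF y(1)] unfolding ball_in_def by auto
    have b: "d ?c y2 \<le> R / 2 ^ t" using f[OF y(2)] y(3) unfolding ball_in_def by auto
    have "d y1 y2 \<le> d y1 ?c + d ?c y2" by (rule d_tri[OF y1X cX y2X])
    also have "\<dots> \<le> 2 * R / 2 ^ t" using a b d_sym[OF y1X cX] by simp
    finally have "d y1 y2 \<le> s" using assms(5) by linarith
    then show False using assms(4) y by force
  qed
  moreover have "f ` Y \<subseteq> C" using f by blast
  moreover have "finite C" using C(1) finX finite_subset by blast
  ultimately have "card Y \<le> card C" by (metis card_inj_on_le)
  then show ?thesis using C(2) by linarith
qed


lemma b_ge3: "1/\<epsilon> \<ge> 3" using eps0 eps3 by (simp add: field_simps)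

lemma eps_pow: "\<epsilon> powr (- 4 * \<rho>) = (1/\<epsilon>) powr (4 * \<rho>)"
  using eps0 by (simp add: powr_minus_divide powr_divide)

lemma exists_t: "\<exists>t::nat. 2 * (1/\<epsilon>)^2 \<le> 2^t \<and> (2::real)^t \<le> (1/\<epsilon>)^4"
proof -
  define b where "b = 1/\<epsilon>"
  have b3: "b \<ge> 3" using b_ge3 b_def by simp
  obtain n where "2 * b^2 < 2^n" using real_arch_pow[of 2 "2*b^2"] by auto
  then have ex: "\<exists>t. 2 * b^2 \<le> (2::real)^t" by (auto intro: less_imp_le)
  define t where "t = (LEAST t. 2 * b^2 \<le> (2::real)^t)"
  have t1: "2 * b^2 \<le> (2::real)^t" unfolding t_def by (rule LeastI_ex[OF ex])
  have "b^2 \<ge> 3^2" using b3 by (intro power_mono) auto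
  then have "b^2 \<ge> 9" by simp
  have "t \<noteq> 0"
  proof
    assume "t = 0"
    then show False using t1 \<open>b^2 \<ge> 9\<close> by simp
  qed
  have "t - 1 < (LEAST t. 2 * b^2 \<le> (2::real)^t)" using \<open>t \<noteq> 0\<close> t_def by simp
  then have "\<not> 2 * b^2 \<le> (2::real)^(t-1)" by (rule not_less_Least)
  then have "(2::real)^(t-1) < 2 * b^2" by simp
  moreover have "(2::real)^t = 2 * 2^(t-1)" using \<open>t \<noteq> 0\<close> by (cases t) auto
  ultimately have "(2::real)^t < 4 * b^2" by simp
  also have "4 * b^2 \<le> b^2 * b^2" using \<open>b^2 \<ge> 9\<close> by (intro mult_right_mono) auto
  also have "\<dots> = b^4" by algebra
  finally show ?thesis using t1 b_def by (intro exI[of _ t]) auto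
qed

lemma N_fin: "i \<in> {1..L} \<Longrightarrow> N i \<subseteq> ring X d \<epsilon> v i \<and> finite (N i)"
proof -
  assume i: "i \<in> {1..L}"
  then have "N i \<subseteq> ring X d \<epsilon> v i" using nets[OF i] unfolding is_net_def by blast
  moreover have "ring X d \<epsilon> v i \<subseteq> X" using i by (intro ring_X) simp
  ultimately have "N i \<subseteq> X" by (rule order_trans)
  then have "finite (N i)" using finX by (rule finite_subset)
  then show ?thesis using \<open>N i \<subseteq> ring X d \<epsilon> v i\<close> by simp
qed

lemma N_bound_rho:
  assumes i: "i \<in> {1..L}" and r: "\<rho> \<in> DS"
  shows "real (card (N i)) \<le> (1/\<epsilon>) powr (4 * \<rho>)"
proof -
  define b where "b = 1/\<epsilon>"
  have b3: "b \<ge> 3" using b_ge3 b_def by simp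
  obtain t where t: "2 * b^2 \<le> (2::real)^t" "(2::real)^t \<le> b^4" using exists_t b_def by blast
  have i1: "i = Suc (i - 1)" using i by simp
  have radi: "rad \<epsilon> i = b * rad \<epsilon> (i - 1)" using rad_Suc[of "i-1"] i1 b_def by (simp add: field_simps)
  have r0: "rad \<epsilon> (i-1) > 0" using rad_ge1[of "i-1"] by linarith
  have Nsub: "N i \<subseteq> ball_in X d v (rad \<epsilon> i)"
  proof
    fix z assume "z \<in> N i"
    then have "z \<in> ring X d \<epsilon> v i" using N_fin[OF i] by blast
    then have "z \<in> X \<and> d v z \<le> rad \<epsilon> i" using ring_sub[of i z] i by simp
    then show "z \<in> ball_in X d v (rad \<epsilon> i)" unfolding ball_in_def by simp
  qed
  have sepN: "\<forall>y1\<in>N i. \<forall>y2\<in>N i. y1 \<noteq> y2 \<longrightarrow> d y1 y2 > \<epsilon> * rad \<epsilon> (i - 1)"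
    using nets[OF i] unfolding is_net_def by blast
  have "2 * rad \<epsilon> i / 2^t \<le> \<epsilon> * rad \<epsilon> (i - 1)"
  proof -
    have "2 * rad \<epsilon> i = 2 * b * rad \<epsilon> (i-1)" using radi by simp
    also have "\<dots> = (2 * b^2) * (\<epsilon> * rad \<epsilon> (i-1))" using eps0 b_def by (simp add: power2_eq_square field_simps)
    also have "\<dots> \<le> 2^t * (\<epsilon> * rad \<epsilon> (i-1))" using t(1) eps0 r0 by (intro mult_right_mono) auto
    finally show ?thesis by (simp add: field_simps)
  qed
  then have "real (card (N i)) \<le> (2 powr \<rho>) ^ t"
    using packing[OF r vX Nsub sepN] by blast
  also have "(2 powr \<rho>) ^ t = (2 ^ t) powr \<rho>"
  proof -
    have "(2 powr \<rho>) ^ t = 2 powr (real t * \<rho>)" by (rule powr_power) simp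
    also have "\<dots> = (2 powr real t) powr \<rho>" by (simp add: powr_powr)
    also have "2 powr real t = (2::real) ^ t" by (simp add: powr_realpow)
    finally show ?thesis .
  qed
  also have "\<dots> \<le> (b ^ 4) powr \<rho>" using t(2) DS_ge0[OF r] by (intro powr_mono2) auto
  also have "\<dots> = b powr (4 * \<rho>)"
  proof -
    have "b ^ 4 = b powr (4::real)" using b3 by simp
    then show ?thesis by (simp add: powr_powr)
  qed
  finally show ?thesis unfolding b_def .
qed

lemma G_ge1: "G \<ge> 1"
proof -
  have "1 \<le> (1/\<epsilon>) powr (4 * doubling_dim X d)"
    using b_ge3 dim_ge0 by (intro ge_one_powr_ge_zero) auto
  then show ?thesis unfolding Gamma_def eps_pow by linarith
qed

lemma N_bound: assumes i: "i \<in> {1..L}" shows "card (N i) \<le> nat G"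
proof (rule ccontr)
  assume "\<not> card (N i) \<le> nat G"
  then have c1: "real (card (N i)) \<ge> real_of_int G + 1" using G_ge1 by linarith
  define b where "b = 1/\<epsilon>"
  have b3: "b \<ge> 3" using b_ge3 b_def by simp
  define c where "c = real (card (N i))"
  have "b powr (4 * doubling_dim X d) \<le> real_of_int G"
    unfolding Gamma_def b_def eps_pow[symmetric] by linarith
  then have lt: "b powr (4 * doubling_dim X d) < c" using c1 c_def by linarith
  have cpos: "c > 0" using c1 G_ge1 c_def by linarith
  define \<rho>0 where "\<rho>0 = log b c / 4"
  have brc: "b powr (4 * \<rho>0) = c" unfolding \<rho>0_def using b3 cpos by simp
  have "b powr (4 * doubling_dim X d) < b powr (4 * \<rho>0)" using lt brc by simp
  then have "4 * doubling_dim X d < 4 * \<rho>0" using powr_less_cancel_iff[of b] b3 by simp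
  then have "Inf DS < \<rho>0" unfolding dim_eq by simp
  then obtain \<rho> where r: "\<rho> \<in> DS" "\<rho> < \<rho>0" using cInf_lessD[of DS \<rho>0] DS_nonempty by blast
  have "c \<le> b powr (4 * \<rho>)" using N_bound_rho[OF i r(1)] c_def b_def by simp
  also have "\<dots> < b powr (4 * \<rho>0)" using r(2) b3 by (intro powr_less_mono) auto
  finally show False using brc by simp
qed


lemma P_fin: assumes "i \<in> {1..L}" "y \<in> N i" shows "finite (P i y) \<and> card (P i y) \<le> k + 1"
proof -
  have "P i y \<subseteq> ring X d \<epsilon> v i" using portals[OF assms] unfolding cluster_def by blast
  moreover have "ring X d \<epsilon> v i \<subseteq> X" using assms(1) by (intro ring_X) simp
  ultimately have "P i y \<subseteq> X" by (rule order_trans)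
  then have "finite (P i y)" using finX by (rule finite_subset)
  moreover have "card (P i y) \<le> k + 1" using portals[OF assms] by simp
  ultimately show ?thesis by simp
qed

definition "T i = {z\<in>Q. \<epsilon> * rad \<epsilon> (i-1) < d v z \<and> d v z \<le> rad \<epsilon> i}"

lemma T_sub: assumes "1 \<le> i"
  shows "T i \<subseteq> (\<Union>i'\<in>{i-1, i} \<inter> {1..L}. \<Union>y\<in>N i'. P i' y)"
proof
  fix z assume z: "z \<in> T i"
  then have zQ: "z \<in> Q" and z1: "\<epsilon> * rad \<epsilon> (i-1) < d v z" and z2: "d v z \<le> rad \<epsilon> i"
    unfolding T_def by auto
  obtain i' y where i': "i' \<in> {1..L}" "y \<in> N i'" "z \<in> P i' y" "z \<in> ring X d \<epsilon> v i'"
    using Q_ring[OF zQ] by blast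
  have r: "rad \<epsilon> (i'-1) < d v z" "d v z \<le> rad \<epsilon> i'" using ring_sub[OF _ i'(4)] i'(1) by auto
  have "rad \<epsilon> (i'-1) < rad \<epsilon> i" using r z2 by linarith
  then have a: "i' - 1 < i" using rad_less_iff by blast
  have "\<epsilon> * rad \<epsilon> (i-1) < \<epsilon> * rad \<epsilon> (Suc i')" using z1 r(2) rad_Suc[of i'] eps0 by simp
  then have "rad \<epsilon> (i-1) < rad \<epsilon> (Suc i')" using eps0 by simp
  then have b: "i - 1 < Suc i'" using rad_less_iff by blast
  have "i' \<in> {i-1, i}" using a b i'(1) assms by auto
  then show "z \<in> (\<Union>i'\<in>{i-1, i} \<inter> {1..L}. \<Union>y\<in>N i'. P i' y)" using i' by blast
qed

lemma T_card: assumes "1 \<le> i" shows "finite (T i) \<and> card (T i) \<le> 2 * nat G * (k + 1)"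
proof -
  let ?I = "{i-1, i} \<inter> {1..L}"
  have finI: "finite ?I" by simp
  have fin: "finite (\<Union>y\<in>N i'. P i' y)" if "i' \<in> ?I" for i'
    using N_fin[of i'] P_fin[of i'] that by auto
  have c: "card (\<Union>y\<in>N i'. P i' y) \<le> nat G * (k + 1)" if "i' \<in> ?I" for i'
  proof -
    have i': "i' \<in> {1..L}" using that by blast
    have "card (\<Union>y\<in>N i'. P i' y) \<le> (\<Sum>y\<in>N i'. card (P i' y))"
      using N_fin[OF i'] by (intro card_UN_le) auto
    also have "\<dots> \<le> (\<Sum>y\<in>N i'. k + 1)" using P_fin[OF i'] by (intro sum_mono) auto
    also have "\<dots> = card (N i') * (k + 1)" by simp
    also have "\<dots> \<le> nat G * (k + 1)" using N_bound[OF i'] by (intro mult_right_mono) simp_all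
    finally show ?thesis .
  qed
  have "card (\<Union>i'\<in>?I. \<Union>y\<in>N i'. P i' y) \<le> (\<Sum>i'\<in>?I. card (\<Union>y\<in>N i'. P i' y))"
    using finI by (rule card_UN_le)
  also have "\<dots> \<le> (\<Sum>i'\<in>?I. nat G * (k + 1))" using c by (intro sum_mono) auto
  also have "\<dots> = card ?I * (nat G * (k + 1))" by simp
  also have "\<dots> \<le> 2 * (nat G * (k + 1))"
  proof -
    have "card ?I \<le> card {i-1, i}" by (intro card_mono) auto
    also have "\<dots> \<le> 2" by (simp add: card_insert_le_m1)
    finally show ?thesis by (intro mult_right_mono) auto
  qed
  finally have "card (\<Union>i'\<in>?I. \<Union>y\<in>N i'. P i' y) \<le> 2 * nat G * (k + 1)" by simp
  moreover have "finite (\<Union>i'\<in>?I. \<Union>y\<in>N i'. P i' y)" using fin finI by blast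
  ultimately show ?thesis using T_sub[OF assms] by (meson card_mono order_trans finite_subset)
qed

lemma q_in: "l \<in> {1..m} \<Longrightarrow> q l \<in> Q" using qbij bij_betwE by blast
lemma q_inj: "inj_on q {1..m}" using qbij bij_betw_def by blast

lemma dist_lemma:
  assumes l': "1 \<le> l'" and ll: "l' + 2 * nat G * (k + 1) \<le> l" and lm: "l \<le> m"
  shows "d v (q l') \<le> \<epsilon> * d v (q l)"
proof (rule ccontr)
  assume H: "\<not> d v (q l') \<le> \<epsilon> * d v (q l)"
  have xQ: "q l \<in> Q" using q_in ll lm l' by auto
  obtain i where i: "i \<in> {1..L}" "rad \<epsilon> (i-1) < d v (q l)" "d v (q l) \<le> rad \<epsilon> i"
    using Q_props[OF xQ] by blast
  have "q ` {l'..l} \<subseteq> T i"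
  proof
    fix z assume "z \<in> q ` {l'..l}"
    then obtain l'' where l'': "l'' \<in> {l'..l}" "z = q l''" by blast
    have zQ: "z \<in> Q" using q_in l'' l' lm by auto
    have "d v (q l') \<le> d v z" using qsorted[of l' l''] l'' l' lm by auto
    moreover have "d v z \<le> d v (q l)" using qsorted[of l'' l] l'' l' lm by auto
    moreover have "\<epsilon> * rad \<epsilon> (i-1) < \<epsilon> * d v (q l)" using i(2) eps0 by simp
    ultimately show "z \<in> T i" using H i(3) zQ unfolding T_def by auto
  qed
  moreover have "inj_on q {l'..l}" using q_inj by (rule inj_on_subset) (use l' lm in auto)
  ultimately have "card {l'..l} \<le> card (T i)"
    using T_card[of i] i(1) by (metis atLeastAtMost_iff card_image card_mono)
  moreover have "card (T i) \<le> 2 * nat G * (k + 1)" using T_card[of i] i(1) by simp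
  moreover have "card {l'..l} = Suc l - l'" by simp
  ultimately show False using ll by linarith
qed


end

context cons begin
abbreviation "A j \<equiv> Aset Q q k v j"
abbreviation "E \<equiv> HQ_edges Q q k G v"
definition "gi l = (int l - 1) div (int k + 1) + 1"
definition "Jf j = \<lceil>real_of_int (j - 2 * G - 1) / 2\<rceil>"

lemma gi_bounds: assumes "1 \<le> l"
  shows "(gi l - 1) * (int k + 1) + 1 \<le> int l \<and> int l \<le> gi l * (int k + 1) \<and> 1 \<le> gi l \<and> gi l \<le> int l"
proof -
  define D where "D = (int l - 1) div (int k + 1)"
  define R where "R = (int l - 1) mod (int k + 1)"
  have e: "int l - 1 = D * (int k + 1) + R" unfolding D_def R_def by (rule div_mult_mod_eq[symmetric])
  have r1: "0 \<le> R" unfolding R_def by (rule pos_mod_sign) simp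
  have r2: "R < int k + 1" unfolding R_def by (rule pos_mod_bound) simp
  note r = r1 r2
  have D0: "D \<ge> 0" unfolding D_def using assms by (subst pos_imp_zdiv_nonneg_iff) auto
  have DD: "D \<le> D * (int k + 1)" using D0 by (simp add: mult_le_cancel_left1)
  have g: "gi l = D + 1" unfolding gi_def D_def by simp
  have m1: "(D + 1 - 1) * (int k + 1) = D * (int k + 1)" by simp
  have m2: "(D + 1) * (int k + 1) = D * (int k + 1) + (int k + 1)" by (simp add: algebra_simps)
  show ?thesis unfolding g m1 m2 using e r1 r2 D0 DD by linarith
qed

lemma gi_unique: assumes "(j - 1) * (int k + 1) + 1 \<le> int l" "int l \<le> j * (int k + 1)" "1 \<le> l"
  shows "j = gi l"
proof -
  have b: "(gi l - 1) * (int k + 1) + 1 \<le> int l" "int l \<le> gi l * (int k + 1)" using gi_bounds[OF assms(3)] by auto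
  have k0: "int k + 1 > 0" by simp
  show ?thesis
  proof (rule ccontr)
    assume "j \<noteq> gi l"
    then consider "j < gi l" | "gi l < j" by linarith
    then show False
    proof cases
      case 1 then have "j \<le> gi l - 1" by simp
      then have "j * (int k + 1) \<le> (gi l - 1) * (int k + 1)" using k0 by (intro mult_right_mono) auto
      then show False using assms b by linarith
    next
      case 2 then have "gi l \<le> j - 1" by simp
      then have "gi l * (int k + 1) \<le> (j - 1) * (int k + 1)" using k0 by (intro mult_right_mono) auto
      then show False using assms b by linarith
    qed
  qed
qed

lemma A_pos: "j \<ge> 1 \<Longrightarrow> a \<in> A j \<longleftrightarrow> (\<exists>l. a = q l \<and> (j - 1) * (int k + 1) + 1 \<le> int l \<and> int l \<le> j * (int k + 1) \<and> 1 \<le> l \<and> l \<le> m)"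
  unfolding Aset_def by auto

lemma A_nonpos: "j \<le> 0 \<Longrightarrow> A j = {v}"
  unfolding Aset_def by auto

lemma A_subQ: "j \<ge> 1 \<Longrightarrow> A j \<subseteq> Q"
  using A_pos q_in by fastforce

lemma A_grp: assumes "j \<ge> 1" "q l \<in> A j" "1 \<le> l" "l \<le> m" shows "j = gi l"
proof -
  obtain l' where l': "q l = q l'" "(j - 1) * (int k + 1) + 1 \<le> int l'" "int l' \<le> j * (int k + 1)" "1 \<le> l'" "l' \<le> m"
    using A_pos[OF assms(1)] assms(2) by blast
  have "l = l'" using inj_onD[OF q_inj l'(1)] l'(4,5) assms(3,4) by simp
  then show ?thesis using gi_unique[OF l'(2) l'(3) l'(4)] by simp
qed

lemma x_in_A: assumes "1 \<le> l" "l \<le> m" shows "q l \<in> A (gi l)"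
  using gi_bounds[OF assms(1)] assms A_pos[of "gi l" "q l"] by auto

lemma A_card: "finite (A j) \<and> card (A j) \<le> k + 1"
proof (cases "j \<le> 0")
  case True then show ?thesis using A_nonpos by simp
next
  case False
  let ?lo = "(j - 1) * (int k + 1) + 1" and ?hi = "j * (int k + 1)"
  have "A j \<subseteq> q ` nat ` {?lo..?hi}"
  proof
    fix a assume "a \<in> A j"
    then obtain l where l: "a = q l" "?lo \<le> int l" "int l \<le> ?hi" using A_pos[of j a] False by auto
    then have "l \<in> nat ` {?lo..?hi}" by (intro image_eqI[of _ _ "int l"]) auto
    then show "a \<in> q ` nat ` {?lo..?hi}" using l by blast
  qed
  moreover have "card (q ` nat ` {?lo..?hi}) \<le> k + 1"
  proof -
    have "card (q ` nat ` {?lo..?hi}) \<le> card {?lo..?hi}"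
      by (meson card_image_le finite_atLeastAtMost_int finite_imageI order_trans)
    also have "\<dots> = k + 1" by (simp add: algebra_simps)
    finally show ?thesis .
  qed
  ultimately show ?thesis by (meson card_mono finite_atLeastAtMost_int finite_imageI finite_subset order_trans)
qed

lemma ceil_half: assumes "\<lceil>real_of_int x / 2\<rceil> = c" shows "2 * c - 2 < x \<and> x \<le> 2 * c"
proof -
  have h: "real_of_int c - 1 < real_of_int x / 2" "real_of_int x / 2 \<le> real_of_int c"
    using ceiling_correct[of "real_of_int x / 2"] assms by auto
  have e1: "real_of_int (2 * c - 2) = 2 * real_of_int c - 2" by simp
  have e2: "real_of_int (2 * c) = 2 * real_of_int c" by simp
  have "real_of_int (2 * c - 2) < real_of_int x" using h(1) e1 by linarith
  moreover have "real_of_int x \<le> real_of_int (2 * c)" using h(2) e2 by linarith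
  ultimately show ?thesis by (simp only: of_int_less_iff of_int_le_iff)
qed

lemma Jf_bounds: "2 * Jf j - 2 < j - 2 * G - 1 \<and> j - 2 * G - 1 \<le> 2 * Jf j"
  using ceil_half[of "j - 2 * G - 1" "Jf j"] unfolding Jf_def by simp

lemma Jf_pos: assumes "Jf j \<ge> 1" shows "Jf j + 2 * G + 1 \<le> j \<and> 2 * Jf j \<le> j"
  using Jf_bounds[of j] assms G_ge1 by linarith

lemma Jf_nonpos: assumes "Jf j \<le> 0" shows "j \<le> 2 * G + 1"
  using Jf_bounds[of j] assms by linarith

lemma Jf_eq: assumes "Jf j = g" shows "j = 2 * g + 2 * G \<or> j = 2 * g + 2 * G + 1"
  using Jf_bounds[of j] assms by linarith

lemma E_def2: "e \<in> E \<longleftrightarrow> (\<exists>a b j. e = {a, b} \<and> j \<ge> 1 \<and> A j \<noteq> {} \<and> a \<in> A j \<and> b \<in> A (Jf j))"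
  unfolding HQ_edges_def Jf_def by blast


lemma path_weight_snoc: assumes "p \<noteq> []"
  shows "path_weight d (p @ [x]) = path_weight d p + d (last p) x"
proof -
  obtain n where n: "length p = Suc n" using assms by (cases p) auto
  have "path_weight d (p @ [x]) = (\<Sum>i<Suc n. d ((p @ [x]) ! i) ((p @ [x]) ! Suc i))"
    unfolding path_weight_def using n by simp
  also have "\<dots> = (\<Sum>i<n. d ((p @ [x]) ! i) ((p @ [x]) ! Suc i)) + d ((p @ [x]) ! n) ((p @ [x]) ! Suc n)"
    by simp
  also have "(\<Sum>i<n. d ((p @ [x]) ! i) ((p @ [x]) ! Suc i)) = (\<Sum>i<n. d (p ! i) (p ! Suc i))"
    by (rule sum.cong) (use n in \<open>auto simp: nth_append\<close>)
  also have "(p @ [x]) ! n = last p" using n assms by (simp add: nth_append last_conv_nth)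
  also have "(p @ [x]) ! Suc n = x" using n by (simp add: nth_append)
  finally show ?thesis unfolding path_weight_def using n by simp
qed

lemma is_path_snoc: assumes "is_path V' E' p a b" "x \<in> V'" "x \<notin> set p" "{b, x} \<in> E'"
  shows "is_path V' E' (p @ [x]) a x"
proof -
  have p: "p \<noteq> []" "hd p = a" "last p = b" "distinct p" "set p \<subseteq> V'"
    "\<And>i. Suc i < length p \<Longrightarrow> {p ! i, p ! Suc i} \<in> E'" using assms(1) unfolding is_path_def by auto
  have e: "{(p @ [x]) ! i, (p @ [x]) ! Suc i} \<in> E'" if "Suc i < length (p @ [x])" for i
  proof (cases "Suc i < length p")
    case True then show ?thesis using p(6) by (simp add: nth_append)
  next
    case False
    then have i: "i = length p - 1" using that by simp
    have "(p @ [x]) ! i = b" using i p(1,3) by (simp add: nth_append last_conv_nth)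
    moreover have "(p @ [x]) ! Suc i = x" using i p(1) by (simp add: nth_append)
    ultimately show ?thesis using assms(4) by simp
  qed
  show ?thesis unfolding is_path_def using p assms(2,3) e by auto
qed

lemma path_single: "a \<in> V' \<Longrightarrow> is_path V' E' [a] a a"
  unfolding is_path_def by auto

lemma edge_to: assumes "1 \<le> l" "l \<le> m" "b \<in> A (Jf (gi l))" shows "{b, q l} \<in> E"
  unfolding E_def2 using x_in_A[OF assms(1,2)] assms(3) gi_bounds[OF assms(1)]
  by (intro exI[of _ "q l"] exI[of _ b] exI[of _ "gi l"]) (auto simp: insert_commute)


lemma path_exists:
  assumes S: "S \<subseteq> Q" "card S \<le> k"
  shows "1 \<le> l \<Longrightarrow> l \<le> m \<Longrightarrow> q l \<notin> S \<Longrightarrow>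
    \<exists>p. is_path (insert v Q - S) (del_vertices_E E S) p v (q l) \<and>
        path_weight d p \<le> (1 + 3 * \<epsilon>) * d v (q l) \<and>
        (\<forall>z\<in>set p. d v z \<le> d v (q l)) \<and> (2::int) ^ (length p - 1) \<le> 2 * gi l"
proof (induction l rule: less_induct)
  case (less l)
  note l = less.prems
  define x where "x = q l"
  define g where "g = gi l"
  define J where "J = Jf g"
  have xQ: "x \<in> Q" using q_in l x_def by auto
  have xX: "x \<in> X" using xQ QX by blast
  have dx: "d v x > 1" using dvQ[OF xQ] .
  have g1: "1 \<le> g" "g \<le> int l" "(g - 1) * (int k + 1) + 1 \<le> int l"
    using gi_bounds[OF l(1)] g_def by auto
  have vS: "v \<notin> S" using vQ S by blast
  have E'I: "{b, x} \<in> del_vertices_E E S" if "b \<in> A J" "b \<notin> S" for b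
    using edge_to[OF l(1,2)] that l(3) J_def g_def x_def unfolding del_vertices_E_def by auto
  show ?case
  proof (cases "J \<le> 0")
    case True
    have "is_path (insert v Q - S) (del_vertices_E E S) [v] v v" using vS by (intro path_single) auto
    then have "is_path (insert v Q - S) (del_vertices_E E S) ([v] @ [x]) v x"
      using E'I[of v] A_nonpos[OF True] xQ vQ l(3) x_def vS by (intro is_path_snoc) auto
    moreover have "path_weight d ([v] @ [x]) = d v x"
      using path_weight_snoc[of "[v]" x] by (simp add: path_weight_def)
    moreover have "d v v \<le> d v x" using d_self[OF vX] dx by simp
    ultimately show ?thesis unfolding x_def[symmetric] using g1 g_def dx eps0
      by (intro exI[of _ "[v] @ [x]"]) auto
  next
    case False
    then have J1: "J \<ge> 1" by simp
    have Jb: "J + 2 * G + 1 \<le> g" "2 * J \<le> g" using Jf_pos[of g] J1 J_def by auto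
    define lo where "lo = (J - 1) * (int k + 1) + 1"
    define hi where "hi = J * (int k + 1)"
    have lo1: "1 \<le> lo" unfolding lo_def using J1 by simp
    have "J * (int k + 1) \<le> (g - 2 * G - 1) * (int k + 1)" using Jb by (intro mult_right_mono) auto
    then have hib: "hi + 2 * G * (int k + 1) + 1 \<le> int l" unfolding hi_def using g1(3) by (simp add: algebra_simps)
    define B where "B = nat ` {lo..hi}"
    have Bprop: "1 \<le> l' \<and> int l' + 2 * G * (int k + 1) + 1 \<le> int l \<and> lo \<le> int l' \<and> int l' \<le> hi"
      if "l' \<in> B" for l'
      using that lo1 hib unfolding B_def by auto
    have cB: "card B = k + 1"
    proof -
      have "inj_on nat {lo..hi}" using lo1 by (intro inj_onI) auto
      then have "card B = card {lo..hi}" unfolding B_def by (rule card_image)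
      also have "\<dots> = k + 1" unfolding lo_def hi_def by (simp add: algebra_simps)
      finally show ?thesis .
    qed
    have G0: "0 \<le> 2 * G * (int k + 1)" using G_ge1 by simp
    have Bm: "B \<subseteq> {1..m}"
    proof
      fix l'' assume "l'' \<in> B"
      then have h: "1 \<le> l''" "int l'' + 2 * G * (int k + 1) + 1 \<le> int l" using Bprop by auto
      then have "l'' \<le> l" using G0 by linarith
      then show "l'' \<in> {1..m}" using h(1) l(2) by simp
    qed
    have "inj_on q B" using q_inj Bm inj_on_subset by blast
    then have cqB: "card (q ` B) = k + 1" using cB card_image by metis
    have "\<not> q ` B \<subseteq> S"
    proof
      assume "q ` B \<subseteq> S"
      then have "card (q ` B) \<le> card S" using finQ S(1) by (meson card_mono finite_subset)
      then show False using cqB S(2) by simp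
    qed
    then obtain l' where l': "l' \<in> B" "q l' \<notin> S" by blast
    define y where "y = q l'"
    have l'p: "1 \<le> l'" "int l' + 2 * G * (int k + 1) + 1 \<le> int l" "lo \<le> int l'" "int l' \<le> hi"
      using Bprop[OF l'(1)] by auto
    have "int (nat G) = G" using G_ge1 by simp
    then have "int (l' + 2 * nat G * (k + 1)) = int l' + 2 * G * (int k + 1)" by (simp add: algebra_simps)
    then have "int (l' + 2 * nat G * (k + 1)) \<le> int l" using l'p(2) by linarith
    then have l'l: "l' + 2 * nat G * (k + 1) \<le> l" by (simp only: of_nat_le_iff)
    have l'm: "l' < l" "l' \<le> m" using l'p(2) l(2) G0 by linarith+
    have yA: "y \<in> A J" unfolding y_def using A_pos[OF J1] l'p l'm lo_def hi_def by auto
    have dy: "d v y \<le> \<epsilon> * d v x" unfolding y_def x_def using dist_lemma[OF l'p(1) l'l l(2)] .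
    have yQ: "y \<in> Q" using q_in l'p(1) l'm(2) y_def by auto
    have yX: "y \<in> X" using yQ QX by blast
    have "\<epsilon> * d v x < 1 * d v x" using dx eps3 by (intro mult_strict_right_mono) auto
    then have dyx: "d v y < d v x" using dy by simp
    obtain p where p: "is_path (insert v Q - S) (del_vertices_E E S) p v y"
        "path_weight d p \<le> (1 + 3 * \<epsilon>) * d v y" "\<forall>z\<in>set p. d v z \<le> d v y"
        "(2::int) ^ (length p - 1) \<le> 2 * gi l'"
      using less.IH[OF l'm(1) l'p(1) l'm(2) l'(2)] y_def by blast
    have pne: "p \<noteq> []" "last p = y" using p(1) unfolding is_path_def by auto
    have xnp: "x \<notin> set p" using p(3) dyx by force
    have newp: "is_path (insert v Q - S) (del_vertices_E E S) (p @ [x]) v x"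
      using p(1) xQ l(3) x_def xnp E'I[OF yA] l'(2) y_def by (intro is_path_snoc) auto
    have w: "path_weight d (p @ [x]) = path_weight d p + d y x"
      using path_weight_snoc[OF pne(1)] pne(2) by simp
    have "d y x \<le> d y v + d v x" by (rule d_tri[OF yX vX xX])
    also have "d y v = d v y" using d_sym[OF yX vX] .
    finally have dyx2: "d y x \<le> d v y + d v x" .
    have dy0: "d v y \<ge> 0" using d_nonneg[OF vX yX] .
    have "(3 * \<epsilon>) * \<epsilon> \<le> 1 * \<epsilon>" using eps0 eps3 by (intro mult_right_mono) auto
    then have e1: "(2 + 3 * \<epsilon>) * \<epsilon> \<le> 3 * \<epsilon>" by (simp add: algebra_simps)
    have "(2 + 3 * \<epsilon>) * d v y \<le> (2 + 3 * \<epsilon>) * (\<epsilon> * d v x)" using dy eps0 by (intro mult_left_mono) auto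
    also have "\<dots> = ((2 + 3 * \<epsilon>) * \<epsilon>) * d v x" by simp
    also have "\<dots> \<le> (3 * \<epsilon>) * d v x" using mult_right_mono[OF e1, of "d v x"] dx by simp
    finally have "(2 + 3 * \<epsilon>) * d v y \<le> 3 * \<epsilon> * d v x" .
    then have wb: "path_weight d (p @ [x]) \<le> (1 + 3 * \<epsilon>) * d v x"
      using w p(2) dyx2 by (simp add: algebra_simps)
    have gl': "gi l' \<le> J"
    proof -
      have "(gi l' - 1) * (int k + 1) + 1 \<le> int l'" using gi_bounds[OF l'p(1)] by auto
      then have "(gi l' - 1) * (int k + 1) < J * (int k + 1)" using l'p(4) hi_def by linarith
      then have "gi l' - 1 < J" by (rule mult_right_less_imp_less) simp
      then show ?thesis by simp
    qed
    have "length p \<ge> 1" using pne by (cases p) auto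
    then have ls: "length (p @ [x]) - 1 = Suc (length p - 1)" by simp
    have "(2::int) ^ (length (p @ [x]) - 1) = 2 * 2 ^ (length p - 1)"
      by (simp only: ls power_Suc)
    also have "\<dots> \<le> 2 * (2 * gi l')" using p(4) by simp
    also have "\<dots> \<le> 2 * gi l" using gl' Jb(2) g_def by linarith
    finally have hb: "(2::int) ^ (length (p @ [x]) - 1) \<le> 2 * gi l" .
    have "\<forall>z\<in>set (p @ [x]). d v z \<le> d v x" using p(3) dyx by auto
    then show ?thesis unfolding x_def[symmetric] using newp wb hb by blast
  qed
qed


lemma q_surj: "z \<in> Q \<Longrightarrow> \<exists>l. 1 \<le> l \<and> l \<le> m \<and> z = q l"
  using qbij unfolding bij_betw_def by force

lemma doubleton_cases: "{u, w} = {a, b} \<Longrightarrow> (u = a \<and> w = b) \<or> (u = b \<and> w = a)"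
  by (metis doubleton_eq_iff)

lemma degree_bound: assumes "u \<in> insert v Q" shows "degree E u \<le> 6 * nat G * k"
proof -
  have Gn: "int (nat G) = G" "nat G \<ge> 1" using G_ge1 by auto
  have finV: "finite (insert v Q)" using finQ by simp
  show ?thesis
  proof (cases "u = v")
    case True
    let ?M = "(2 * nat G + 1) * (k + 1)"
    have "{w. {u, w} \<in> E} \<subseteq> q ` {1..?M}"
    proof
      fix w assume "w \<in> {w. {u, w} \<in> E}"
      then obtain a b j where e: "{u, w} = {a, b}" "j \<ge> 1" "a \<in> A j" "b \<in> A (Jf j)"
        unfolding E_def2 by blast
      have aQ: "a \<in> Q" using A_subQ[OF e(2)] e(3) by blast
      then have "u = b \<and> w = a" using doubleton_cases[OF e(1)] True vQ by auto
      then have bv: "b = v" using True by simp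
      have "Jf j \<le> 0"
      proof (rule ccontr)
        assume "\<not> Jf j \<le> 0"
        then have "b \<in> Q" using A_subQ[of "Jf j"] e(4) by auto
        then show False using bv vQ by simp
      qed
      then have j: "j \<le> 2 * G + 1" by (rule Jf_nonpos)
      obtain l where l: "a = q l" "int l \<le> j * (int k + 1)" "1 \<le> l"
        using A_pos[OF e(2)] e(3) by blast
      have "j * (int k + 1) \<le> (2 * G + 1) * (int k + 1)" using j by (intro mult_right_mono) auto
      moreover have "int ?M = (2 * G + 1) * (int k + 1)" using Gn(1) by (simp add: algebra_simps)
      ultimately have "int l \<le> int ?M" using l(2) by linarith
      then have "l \<le> ?M" by (simp only: of_nat_le_iff)
      then have "l \<in> {1..?M}" using l(3) by (simp only: atLeastAtMost_iff)
      then show "w \<in> q ` {1..?M}" using l(1) \<open>u = b \<and> w = a\<close> by blast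
    qed
    then have "degree E u \<le> card (q ` {1..?M})" unfolding degree_def by (rule card_mono[rotated]) simp
    also have "\<dots> \<le> card {1..?M}" by (rule card_image_le) simp
    also have "\<dots> = ?M" by simp
    also have "\<dots> \<le> 6 * nat G * k"
    proof -
      have a: "nat G \<le> nat G * k" "k \<le> nat G * k" "1 \<le> nat G * k" using Gn(2) k1 by simp_all
      have "?M = 2 * (nat G * k) + 2 * nat G + k + 1" by (simp add: algebra_simps)
      moreover have "6 * nat G * k = 6 * (nat G * k)" by simp
      ultimately show ?thesis using a by linarith
    qed
    finally show ?thesis .
  next
    case False
    then have uQ: "u \<in> Q" using assms by blast
    obtain lu where lu: "1 \<le> lu" "lu \<le> m" "u = q lu" using q_surj[OF uQ] by blast
    define g where "g = gi lu"
    have "{w. {u, w} \<in> E} \<subseteq> A (Jf g) \<union> A (2 * g + 2 * G) \<union> A (2 * g + 2 * G + 1)"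
    proof
      fix w assume "w \<in> {w. {u, w} \<in> E}"
      then obtain a b j where e: "{u, w} = {a, b}" "j \<ge> 1" "a \<in> A j" "b \<in> A (Jf j)"
        unfolding E_def2 by blast
      from doubleton_cases[OF e(1)] show "w \<in> A (Jf g) \<union> A (2 * g + 2 * G) \<union> A (2 * g + 2 * G + 1)"
      proof
        assume h: "u = a \<and> w = b"
        then have "j = g" using A_grp[OF e(2) _ lu(1,2)] e(3) lu(3) g_def by blast
        then show ?thesis using h e(4) by blast
      next
        assume h: "u = b \<and> w = a"
        have "Jf j \<ge> 1"
        proof (rule ccontr)
          assume "\<not> Jf j \<ge> 1"
          then have "b = v" using A_nonpos[of "Jf j"] e(4) by auto
          then show False using h False by simp
        qed
        then have "Jf j = g" using A_grp[OF _ _ lu(1,2)] e(4) h lu(3) g_def by blast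
        then have "j = 2 * g + 2 * G \<or> j = 2 * g + 2 * G + 1" by (rule Jf_eq)
        then show ?thesis using h e(3) by blast
      qed
    qed
    then have "degree E u \<le> card (A (Jf g) \<union> A (2 * g + 2 * G) \<union> A (2 * g + 2 * G + 1))"
      unfolding degree_def by (rule card_mono[rotated]) (use A_card in simp)
    also have "\<dots> \<le> card (A (Jf g)) + card (A (2 * g + 2 * G)) + card (A (2 * g + 2 * G + 1))"
      by (meson add_le_mono card_Un_le le_refl order_trans)
    also have "\<dots> \<le> 3 * (k + 1)" using add_mono[OF add_mono[OF conjunct2[OF A_card[of "Jf g"]] conjunct2[OF A_card[of "2 * g + 2 * G"]]] conjunct2[OF A_card[of "2 * g + 2 * G + 1"]]] by simp
    also have "\<dots> \<le> 6 * nat G * k"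
    proof -
      have "3 * (k + 1) \<le> 6 * 1 * k" using k1 by simp
      also have "\<dots> \<le> 6 * nat G * k" using Gn(2) by (intro mult_right_mono) auto
      finally show ?thesis .
    qed
    finally show ?thesis .
  qed
qed

lemma hop_bound: assumes "(2::int) ^ a \<le> 2 * int n" "3 \<le> n"
  shows "real a \<le> 3 * ln (real n)"
proof -
  have "real_of_int ((2::int) ^ a) \<le> real_of_int (2 * int n)" using assms(1) by (simp only: of_int_le_iff)
  then have "(2::real) ^ a \<le> 2 * real n" by simp
  then have "log 2 ((2::real) ^ a) \<le> log 2 (2 * real n)" using assms(2) by (subst log_le_cancel_iff) auto
  moreover have "log 2 ((2::real) ^ a) = real a" by (simp add: log_nat_power)
  moreover have "log 2 (2 * real n) = log 2 2 + log 2 (real n)" using assms(2) by (simp add: log_mult)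
  ultimately have "real a \<le> 1 + log 2 (real n)" by simp
  moreover have "log 2 (real n) = ln (real n) / ln 2" by (simp add: log_def)
  moreover have l2: "ln (2::real) \<ge> 1/2"
  proof -
    have "ln (1/2::real) \<le> 1/2 - 1" by (rule ln_le_minus_one) simp
    then show ?thesis by (simp add: ln_div)
  qed
  moreover have ln1: "ln (real n) \<ge> 1" using assms(2) exp_le by (subst ln_ge_iff) auto
  ultimately have "real a \<le> 1 + ln (real n) / ln 2" by simp
  also have "ln (real n) / ln 2 \<le> 2 * ln (real n)"
  proof -
    have "ln (real n) \<le> (2 * ln (real n)) * ln 2"
    proof -
      have "(2 * ln (real n)) * (1/2) \<le> (2 * ln (real n)) * ln 2" using l2 ln1 by (intro mult_left_mono) auto
      then show ?thesis by simp
    qed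
    moreover have "ln (2::real) > 0" by simp
    ultimately show ?thesis by (simp add: divide_le_eq)
  qed
  finally show ?thesis using ln1 by linarith
qed

end

theorem lemma11:
  shows "\<exists>c1 c2 :: real. \<forall>(X :: nat set) (d :: nat \<Rightarrow> nat \<Rightarrow> real) (k :: nat) (\<epsilon> :: real) (v :: nat)
      N cl P q.
    finite X \<and> metric_on X d \<and> (\<forall>x\<in>X. \<forall>y\<in>X. x \<noteq> y \<longrightarrow> d x y > 1) \<and>
    1 \<le> k \<and> k + 2 \<le> card X \<and> 0 < \<epsilon> \<and> \<epsilon> \<le> 1/3 \<and> v \<in> X \<and>
    valid_construction X d k \<epsilon> v N cl P q
    \<longrightarrow>
    (let Q = portal_set X d \<epsilon> N P;
         V = insert v Q;
         E = HQ_edges Q q k (Gamma X d \<epsilon>) v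
     in (\<forall>S. S \<subseteq> Q \<and> card S \<le> k \<longrightarrow>
           (\<forall>x\<in>Q - S. graph_dist (del_vertices_V V S) (del_vertices_E E S) d v x
                         \<le> ereal ((1 + 3 * \<epsilon>) * d v x))) \<and>
        (\<forall>u\<in>V. real (degree E u) \<le> c1 * real_of_int (Gamma X d \<epsilon>) * real k) \<and>
        (\<forall>x\<in>Q. \<exists>p. is_path V E p v x \<and> path_weight d p \<le> (1 + 3 * \<epsilon>) * d v x \<and>
                    real (length p - 1) \<le> c2 * ln (real (card X))))"
proof (rule exI[of _ 6], rule exI[of _ 3], intro allI impI)
  fix X :: "nat set" and d :: "nat \<Rightarrow> nat \<Rightarrow> real" and k :: nat and \<epsilon> :: real and v :: nat
    and N cl P q
  assume H: "finite X \<and> metric_on X d \<and> (\<forall>x\<in>X. \<forall>y\<in>X. x \<noteq> y \<longrightarrow> d x y > 1) \<and>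
    1 \<le> k \<and> k + 2 \<le> card X \<and> 0 < \<epsilon> \<and> \<epsilon> \<le> 1/3 \<and> v \<in> X \<and>
    valid_construction X d k \<epsilon> v N cl P q"
  interpret c: cons X d k \<epsilon> v N cl P q using H by unfold_locales auto
  let ?Q = "portal_set X d \<epsilon> N P"
  let ?E = "HQ_edges ?Q q k (Gamma X d \<epsilon>) v"
  have P1: "\<forall>S. S \<subseteq> ?Q \<and> card S \<le> k \<longrightarrow>
           (\<forall>x\<in>?Q - S. graph_dist (del_vertices_V (insert v ?Q) S) (del_vertices_E ?E S) d v x
                         \<le> ereal ((1 + 3 * \<epsilon>) * d v x))"
  proof (intro allI impI ballI)
    fix S x assume S: "S \<subseteq> ?Q \<and> card S \<le> k" and x: "x \<in> ?Q - S"
    obtain l where l: "1 \<le> l" "l \<le> card ?Q" "x = q l" using c.q_surj x by blast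
    obtain p where p: "is_path (insert v ?Q - S) (del_vertices_E ?E S) p v x"
        "path_weight d p \<le> (1 + 3 * \<epsilon>) * d v x"
      using c.path_exists[of S l] S l x by auto
    have "graph_dist (del_vertices_V (insert v ?Q) S) (del_vertices_E ?E S) d v x \<le> ereal (path_weight d p)"
      unfolding graph_dist_def del_vertices_V_def using p(1) by (intro INF_lower) auto
    also have "\<dots> \<le> ereal ((1 + 3 * \<epsilon>) * d v x)" using p(2) by simp
    finally show "graph_dist (del_vertices_V (insert v ?Q) S) (del_vertices_E ?E S) d v x
                         \<le> ereal ((1 + 3 * \<epsilon>) * d v x)" .
  qed
  have P2: "\<forall>u\<in>insert v ?Q. real (degree ?E u) \<le> 6 * real_of_int (Gamma X d \<epsilon>) * real k"
  proof
    fix u assume u: "u \<in> insert v ?Q"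
    have "real (degree ?E u) \<le> real (6 * nat (Gamma X d \<epsilon>) * k)"
      using c.degree_bound[OF u] by linarith
    also have "\<dots> = 6 * real_of_int (Gamma X d \<epsilon>) * real k" using c.G_ge1 by simp
    finally show "real (degree ?E u) \<le> 6 * real_of_int (Gamma X d \<epsilon>) * real k" .
  qed
  have P3: "\<forall>x\<in>?Q. \<exists>p. is_path (insert v ?Q) ?E p v x \<and> path_weight d p \<le> (1 + 3 * \<epsilon>) * d v x \<and>
                    real (length p - 1) \<le> 3 * ln (real (card X))"
  proof
    fix x assume x: "x \<in> ?Q"
    obtain l where l: "1 \<le> l" "l \<le> card ?Q" "x = q l" using c.q_surj x by blast
    have dE: "del_vertices_E ?E {} = ?E" unfolding del_vertices_E_def by simp
    obtain p where p: "is_path (insert v ?Q - {}) (del_vertices_E ?E {}) p v x"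
        "path_weight d p \<le> (1 + 3 * \<epsilon>) * d v x" "(2::int) ^ (length p - 1) \<le> 2 * c.gi l"
      using c.path_exists[of "{}" l] l by auto
    have "c.gi l \<le> int l" using c.gi_bounds[OF l(1)] by simp
    also have "int l \<le> int (card X)" using l(2) c.QX c.finX card_mono by (metis le_trans of_nat_le_iff)
    finally have "(2::int) ^ (length p - 1) \<le> 2 * int (card X)" using p(3) by linarith
    then have "real (length p - 1) \<le> 3 * ln (real (card X))" using c.hop_bound H by auto
    then show "\<exists>p. is_path (insert v ?Q) ?E p v x \<and> path_weight d p \<le> (1 + 3 * \<epsilon>) * d v x \<and>
                    real (length p - 1) \<le> 3 * ln (real (card X))"
      using p(1,2) dE by auto
  qed
  show "let Q = ?Q; V = insert v Q; E = HQ_edges Q q k (Gamma X d \<epsilon>) v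
     in (\<forall>S. S \<subseteq> Q \<and> card S \<le> k \<longrightarrow>
           (\<forall>x\<in>Q - S. graph_dist (del_vertices_V V S) (del_vertices_E E S) d v x
                         \<le> ereal ((1 + 3 * \<epsilon>) * d v x))) \<and>
        (\<forall>u\<in>V. real (degree E u) \<le> 6 * real_of_int (Gamma X d \<epsilon>) * real k) \<and>
        (\<forall>x\<in>Q. \<exists>p. is_path V E p v x \<and> path_weight d p \<le> (1 + 3 * \<epsilon>) * d v x \<and>
                    real (length p - 1) \<le> 3 * ln (real (card X)))"
    unfolding Let_def using P1 P2 P3 by blast
qed

end
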